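(* Let ${\bf D}$ be an $L\times N$ complex matrix with $L=Rd$, $N=Md$, partitioned into consecutive column-blocks ${\bf D}[1],\dots,{\bf D}[M]$ of size $L\times d$ with ${\bf D}^H[\ell]{\bf D}[\ell]={\bf I}_d$ for all $\ell$, and assume ${\bf D}{\bf g}\neq{\bf 0}$ for every nonzero block $2k$-sparse ${\bf g}\in\mathbb{C}^N$. Let ${\bf x}_0\in\mathbb{C}^N$ be block $k$-sparse, ${\bf y}={\bf D}{\bf x}_0$, and let $\mu_{\mathrm B}>0$ be the block-coherence of ${\bf D}$. If $kd<\frac12(\mu_{\mathrm B}^{-1}+d)$, then, running BMP on ${\bf y}$: (1) BMP picks a correct block (a block ${\bf D}[\ell]$ with $\|{\bf x}_0[\ell]\|_2>0$) in each step; (2) the residuals satisfy $\|{\bf r}_\ell\|_2^2\le\beta^\ell\|{\bf r}_0\|_2^2$ for all $\ell\ge0$, where $\beta=1-\frac{1-(k-1)d\mu_{\mathrm B}}{k}$.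
   Context: Vectors in $\mathbb{C}^N$ are viewed as concatenations of consecutive length-$d$ blocks ${\bf x}[1],\dots,{\bf x}[M]$; block $k$-sparse means at most $k$ blocks have nonzero Euclidean norm. $\rho(\cdot)$ is the spectral norm. Block-coherence: $\mu_{\mathrm B}=\max_{\ell,r\neq\ell}\frac1d\rho({\bf D}^H[\ell]{\bf D}[r])$. BMP (block matching pursuit): initialize ${\bf r}_0={\bf y}$; at stage $\ell\ge1$ choose $i_\ell=\arg\max_i\|{\bf D}^H[i]{\bf r}_{\ell-1}\|_2$ and update ${\bf r}_\ell={\bf r}_{\ell-1}-{\bf D}[i_\ell]{\bf D}^H[i_\ell]{\bf r}_{\ell-1}$. *)

theory Defs
  imports Complex_Main
begin

(* Vectors in C^n are functions nat => complex, only indices < n matter.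
   Matrices (L x N) are functions nat => nat => complex, D a j = entry in row a, column j.
   Blocks are indexed 0..M-1; block l of x consists of entries l*d .. l*d+d-1. *)

definition vnorm :: "nat \<Rightarrow> (nat \<Rightarrow> complex) \<Rightarrow> real" where
  "vnorm n v = sqrt (\<Sum>t<n. (cmod (v t))\<^sup>2)"

definition blk :: "nat \<Rightarrow> (nat \<Rightarrow> complex) \<Rightarrow> nat \<Rightarrow> (nat \<Rightarrow> complex)" where
  "blk d x l = (\<lambda>t. x (l * d + t))"

definition block_sparse :: "nat \<Rightarrow> nat \<Rightarrow> nat \<Rightarrow> (nat \<Rightarrow> complex) \<Rightarrow> bool" where
  "block_sparse d M k x \<longleftrightarrow> card {l. l < M \<and> vnorm d (blk d x l) \<noteq> 0} \<le> k"

definition matvec :: "nat \<Rightarrow> (nat \<Rightarrow> nat \<Rightarrow> complex) \<Rightarrow> (nat \<Rightarrow> complex) \<Rightarrow> (nat \<Rightarrow> complex)" where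
  "matvec N D g = (\<lambda>a. \<Sum>j<N. D a j * g j)"

definition blk_apply :: "nat \<Rightarrow> (nat \<Rightarrow> nat \<Rightarrow> complex) \<Rightarrow> nat \<Rightarrow> (nat \<Rightarrow> complex) \<Rightarrow> (nat \<Rightarrow> complex)" where
  "blk_apply d D l z = (\<lambda>a. \<Sum>t<d. D a (l * d + t) * z t)"

definition blk_adj_apply :: "nat \<Rightarrow> nat \<Rightarrow> (nat \<Rightarrow> nat \<Rightarrow> complex) \<Rightarrow> nat \<Rightarrow> (nat \<Rightarrow> complex) \<Rightarrow> (nat \<Rightarrow> complex)" where
  "blk_adj_apply L d D l r = (\<lambda>t. \<Sum>a<L. cnj (D a (l * d + t)) * r a)"

definition blk_gram :: "nat \<Rightarrow> nat \<Rightarrow> (nat \<Rightarrow> nat \<Rightarrow> complex) \<Rightarrow> nat \<Rightarrow> nat \<Rightarrow> (nat \<Rightarrow> nat \<Rightarrow> complex)" where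
  "blk_gram L d D l r = (\<lambda>s t. \<Sum>a<L. cnj (D a (l * d + s)) * D a (r * d + t))"

definition spec_norm :: "nat \<Rightarrow> (nat \<Rightarrow> nat \<Rightarrow> complex) \<Rightarrow> real" where
  "spec_norm n G = Sup {vnorm n (\<lambda>s. \<Sum>t<n. G s t * v t) | v. vnorm n v \<le> 1}"

definition block_coherence :: "nat \<Rightarrow> nat \<Rightarrow> nat \<Rightarrow> (nat \<Rightarrow> nat \<Rightarrow> complex) \<Rightarrow> real" where
  "block_coherence L d M D =
     Max {spec_norm d (blk_gram L d D l r) / real d | l r. l < M \<and> r < M \<and> r \<noteq> l}"

(* BMP residuals for a given sequence of chosen block indices i 1, i 2, ... (i 0 unused):
   r_0 = y,  r_l = r_{l-1} - D[i_l] D^H[i_l] r_{l-1} *)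
fun bmp_res :: "nat \<Rightarrow> nat \<Rightarrow> (nat \<Rightarrow> nat \<Rightarrow> complex) \<Rightarrow> (nat \<Rightarrow> complex) \<Rightarrow> (nat \<Rightarrow> nat) \<Rightarrow> nat \<Rightarrow> (nat \<Rightarrow> complex)" where
  "bmp_res L d D y i 0 = y"
| "bmp_res L d D y i (Suc n) =
     (\<lambda>a. bmp_res L d D y i n a
          - blk_apply d D (i (Suc n)) (blk_adj_apply L d D (i (Suc n)) (bmp_res L d D y i n)) a)"

definition bmp_choice :: "nat \<Rightarrow> nat \<Rightarrow> nat \<Rightarrow> (nat \<Rightarrow> nat \<Rightarrow> complex) \<Rightarrow> (nat \<Rightarrow> complex) \<Rightarrow> (nat \<Rightarrow> nat) \<Rightarrow> bool" where
  "bmp_choice L d M D y i \<longleftrightarrow>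
     (\<forall>l\<ge>1. i l < M \<and>
        (\<forall>j<M. vnorm d (blk_adj_apply L d D j (bmp_res L d D y i (l - 1)))
               \<le> vnorm d (blk_adj_apply L d D (i l) (bmp_res L d D y i (l - 1)))))"

end

theory Submission
  imports Defs "HOL-Analysis.L2_Norm" "HOL-Analysis.Convex"
begin


definition gapply :: "nat \<Rightarrow> (nat \<Rightarrow> nat \<Rightarrow> complex) \<Rightarrow> (nat \<Rightarrow> complex) \<Rightarrow> (nat \<Rightarrow> complex)" where
  "gapply n G v = (\<lambda>s. \<Sum>t<n. G s t * v t)"

definition ip :: "nat \<Rightarrow> (nat \<Rightarrow> complex) \<Rightarrow> (nat \<Rightarrow> complex) \<Rightarrow> complex" where
  "ip n u v = (\<Sum>a<n. cnj (u a) * v a)"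

lemma vnorm_L2: "vnorm n v = L2_set (\<lambda>t. cmod (v t)) {..<n}"
  by (simp add: vnorm_def L2_set_def)

lemma vnorm_cong: "(\<And>t. t < n \<Longrightarrow> u t = w t) \<Longrightarrow> vnorm n u = vnorm n w"
  unfolding vnorm_def by (intro arg_cong[where f=sqrt] sum.cong) auto

lemma vnorm_nonneg[simp]: "0 \<le> vnorm n v"
  by (simp add: vnorm_L2)

lemma vnorm_sq: "(vnorm n v)\<^sup>2 = (\<Sum>t<n. (cmod (v t))\<^sup>2)"
  unfolding vnorm_def by (simp add: sum_nonneg)

lemma vnorm_add: "vnorm n (\<lambda>t. u t + w t) \<le> vnorm n u + vnorm n w"
proof -
  have "vnorm n (\<lambda>t. u t + w t) \<le> L2_set (\<lambda>t. cmod (u t) + cmod (w t)) {..<n}"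
    unfolding vnorm_L2 by (rule L2_set_mono) (auto simp: norm_triangle_ineq)
  also have "\<dots> \<le> vnorm n u + vnorm n w" unfolding vnorm_L2 by (rule L2_set_triangle_ineq)
  finally show ?thesis .
qed

lemma vnorm_diff: "vnorm n (\<lambda>t. u t - w t) \<le> vnorm n u + vnorm n w"
proof -
  have "vnorm n (\<lambda>t. u t - w t) \<le> L2_set (\<lambda>t. cmod (u t) + cmod (w t)) {..<n}"
    unfolding vnorm_L2 by (rule L2_set_mono) (auto simp: norm_triangle_ineq4)
  also have "\<dots> \<le> vnorm n u + vnorm n w" unfolding vnorm_L2 by (rule L2_set_triangle_ineq)
  finally show ?thesis .
qed

lemma vnorm_zero_fun: "vnorm n (\<lambda>t. 0) = 0"
  by (simp add: vnorm_def)

lemma vnorm_sum: "finite A \<Longrightarrow> vnorm n (\<lambda>t. \<Sum>j\<in>A. f j t) \<le> (\<Sum>j\<in>A. vnorm n (f j))"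
proof (induction A rule: finite_induct)
  case empty then show ?case by (simp add: vnorm_zero_fun)
next
  case (insert x F)
  have "vnorm n (\<lambda>t. \<Sum>j\<in>insert x F. f j t) = vnorm n (\<lambda>t. f x t + (\<Sum>j\<in>F. f j t))"
    using insert by simp
  also have "\<dots> \<le> vnorm n (f x) + vnorm n (\<lambda>t. \<Sum>j\<in>F. f j t)" by (rule vnorm_add)
  also have "\<dots> \<le> vnorm n (f x) + (\<Sum>j\<in>F. vnorm n (f j))" using insert by simp
  finally show ?case using insert by simp
qed

lemma vnorm_scale: "vnorm n (\<lambda>t. c * v t) = cmod c * vnorm n v"
  unfolding vnorm_L2 by (simp add: norm_mult L2_set_right_distrib)

lemma vnorm_eq0: "vnorm n v = 0 \<Longrightarrow> t < n \<Longrightarrow> v t = 0"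
  unfolding vnorm_L2 by (simp add: L2_set_eq_0_iff)

lemma vnorm_ge: "t < n \<Longrightarrow> cmod (v t) \<le> vnorm n v"
  unfolding vnorm_L2 by (rule member_le_L2_set) auto

lemma ip_self: "ip n v v = complex_of_real ((vnorm n v)\<^sup>2)"
  unfolding ip_def vnorm_sq of_real_sum of_real_power
  by (rule sum.cong) (simp_all, metis complex_norm_square mult.commute of_real_power)

lemma ip_cs: "cmod (ip n u v) \<le> vnorm n u * vnorm n v"
proof -
  have "cmod (ip n u v) \<le> (\<Sum>a<n. cmod (cnj (u a) * v a))"
    unfolding ip_def by (rule norm_sum)
  also have "\<dots> = (\<Sum>a<n. \<bar>cmod (u a)\<bar> * \<bar>cmod (v a)\<bar>)" by (simp add: norm_mult)
  also have "\<dots> \<le> vnorm n u * vnorm n v" unfolding vnorm_L2 by (rule L2_set_mult_ineq)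
  finally show ?thesis .
qed

lemma ip_cong: "(\<And>t. t < n \<Longrightarrow> u t = u' t) \<Longrightarrow> (\<And>t. t < n \<Longrightarrow> w t = w' t) \<Longrightarrow> ip n u w = ip n u' w'"
  unfolding ip_def by (rule sum.cong) auto

lemma ip_cnj: "cnj (ip n u w) = ip n w u"
  unfolding ip_def by (simp add: mult.commute)

lemma adjoint: "ip L (blk_apply d D l z) r = ip d z (blk_adj_apply L d D l r)"
  unfolding ip_def blk_apply_def blk_adj_apply_def
  by (simp add: sum_distrib_left sum_distrib_right sum.swap[where A="{..<L}"] mult_ac)

lemma adj_blk_apply: "blk_adj_apply L d D p (blk_apply d D j c) = gapply d (blk_gram L d D p j) c"
  unfolding gapply_def blk_gram_def blk_adj_apply_def blk_apply_def
  by (rule ext) (simp add: sum_distrib_left sum_distrib_right sum.swap[where A="{..<L}"] mult_ac)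

lemma adj_cong: "(\<And>a. a < L \<Longrightarrow> r a = r' a) \<Longrightarrow> blk_adj_apply L d D p r = blk_adj_apply L d D p r'"
  unfolding blk_adj_apply_def by (rule ext, rule sum.cong) auto

lemma adj_sum: "blk_adj_apply L d D p (\<lambda>a. \<Sum>j\<in>S. f j a) = (\<lambda>t. \<Sum>j\<in>S. blk_adj_apply L d D p (f j) t)"
  unfolding blk_adj_apply_def by (rule ext) (simp add: sum_distrib_left sum.swap[where A=S])


lemma gapply_bdd:
  assumes "vnorm n w \<le> 1"
  shows "vnorm n (gapply n G w) \<le> (\<Sum>s<n. \<Sum>t<n. cmod (G s t))"
proof -
  have "vnorm n (gapply n G w) \<le> (\<Sum>s<n. cmod (gapply n G w s))"
    unfolding vnorm_L2 by (rule L2_set_le_sum) auto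
  also have "\<dots> \<le> (\<Sum>s<n. \<Sum>t<n. cmod (G s t))"
  proof (rule sum_mono)
    fix s assume "s \<in> {..<n}"
    have "cmod (gapply n G w s) \<le> (\<Sum>t<n. cmod (G s t * w t))"
      unfolding gapply_def by (rule norm_sum)
    also have "\<dots> \<le> (\<Sum>t<n. cmod (G s t))"
    proof (rule sum_mono)
      fix t assume "t \<in> {..<n}"
      then have "cmod (w t) \<le> 1" using vnorm_ge[of t n w] assms by auto
      then show "cmod (G s t * w t) \<le> cmod (G s t)"
        by (simp add: norm_mult mult_left_le)
    qed
    finally show "cmod (gapply n G w s) \<le> (\<Sum>t<n. cmod (G s t))" .
  qed
  finally show ?thesis .
qed

lemma spec_bound: "vnorm n (gapply n G v) \<le> spec_norm n G * vnorm n v"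
proof -
  define X where "X = {vnorm n (\<lambda>s. \<Sum>t<n. G s t * v t) | v. vnorm n v \<le> 1}"
  have bdd: "bdd_above X"
    unfolding X_def bdd_above_def
    by (rule exI[of _ "\<Sum>s<n. \<Sum>t<n. cmod (G s t)"])
       (auto intro: gapply_bdd[unfolded gapply_def])
  have sn: "spec_norm n G = Sup X" unfolding spec_norm_def X_def ..
  show ?thesis
  proof (cases "vnorm n v = 0")
    case True
    have "vnorm n (gapply n G v) = vnorm n (\<lambda>s. 0)"
      by (rule vnorm_cong) (simp add: gapply_def vnorm_eq0[OF True])
    then show ?thesis using True by (simp add: vnorm_zero_fun)
  next
    case False
    define c where "c = vnorm n v"
    have cpos: "c > 0" using False c_def vnorm_nonneg[of n v] by linarith
    define w where "w = (\<lambda>t. complex_of_real (1 / c) * v t)"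
    have "vnorm n w = 1" unfolding w_def vnorm_scale using cpos c_def by (simp add: norm_divide)
    then have "vnorm n (gapply n G w) \<in> X" unfolding X_def gapply_def by auto
    then have le: "vnorm n (gapply n G w) \<le> spec_norm n G"
      unfolding sn by (rule cSup_upper[OF _ bdd])
    have "gapply n G w = (\<lambda>s. complex_of_real (1 / c) * gapply n G v s)"
      unfolding gapply_def w_def by (rule ext) (simp add: sum_distrib_left mult_ac)
    then have "vnorm n (gapply n G w) = vnorm n (gapply n G v) / c"
      using cpos vnorm_scale[of n "complex_of_real (1 / c)" "gapply n G v"] by (simp add: norm_divide)
    with le cpos c_def show ?thesis by (simp add: divide_le_eq mult.commute)
  qed
qed

lemma gram_bound:
  assumes "0 < d" "l < M" "r < M" "l \<noteq> r"
  shows "spec_norm d (blk_gram L d D l r) \<le> real d * block_coherence L d M D"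
proof -
  let ?f = "\<lambda>l r. spec_norm d (blk_gram L d D l r) / real d"
  have fin: "finite {?f l r | l r. l < M \<and> r < M \<and> r \<noteq> l}"
  proof -
    have "{?f l r | l r. l < M \<and> r < M \<and> r \<noteq> l} \<subseteq> (\<lambda>(l,r). ?f l r) ` ({..<M} \<times> {..<M})"
      by auto
    then show ?thesis by (rule finite_subset) auto
  qed
  have "?f l r \<le> block_coherence L d M D"
    unfolding block_coherence_def by (rule Max_ge[OF fin]) (use assms in auto)
  then show ?thesis using assms(1) by (simp add: divide_le_eq mult.commute)
qed

lemma gram_vec_bound:
  assumes "0 < d" "l < M" "r < M" "l \<noteq> r"
  shows "vnorm d (gapply d (blk_gram L d D l r) v) \<le> real d * block_coherence L d M D * vnorm d v"
  using spec_bound[of d "blk_gram L d D l r" v] gram_bound[OF assms, of L D]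
  by (meson order_trans mult_right_mono vnorm_nonneg)



definition comb :: "nat \<Rightarrow> (nat \<Rightarrow> nat \<Rightarrow> complex) \<Rightarrow> nat set \<Rightarrow> (nat \<Rightarrow> nat \<Rightarrow> complex) \<Rightarrow> (nat \<Rightarrow> complex)" where
  "comb d D S c = (\<lambda>a. \<Sum>j\<in>S. blk_apply d D j (c j) a)"

lemma ip_sum_left: "ip n (\<lambda>a. \<Sum>j\<in>S. f j a) w = (\<Sum>j\<in>S. ip n (f j) w)"
  unfolding ip_def by (simp add: sum_distrib_right sum.swap[where A=S])

lemma ip_add_right: "ip n u (\<lambda>t. v t + w t) = ip n u v + ip n u w"
  unfolding ip_def by (simp add: distrib_left sum.distrib)

lemma ip_diff_left: "ip n (\<lambda>t. v t - w t) u = ip n v u - ip n w u"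
  unfolding ip_def by (simp add: left_diff_distrib sum_subtractf)

lemma ip_diff_right: "ip n u (\<lambda>t. v t - w t) = ip n u v - ip n u w"
  unfolding ip_def by (simp add: right_diff_distrib sum_subtractf)

lemma blk_apply_diff: "blk_apply d D j (\<lambda>t. u t - w t) a = blk_apply d D j u a - blk_apply d D j w a"
  unfolding blk_apply_def by (simp add: right_diff_distrib sum_subtractf)

lemma blk_apply_cong: "(\<And>t. t < d \<Longrightarrow> u t = w t) \<Longrightarrow> blk_apply d D j u = blk_apply d D j w"
  unfolding blk_apply_def by (rule ext, rule sum.cong) auto

lemma blk_apply_zero: "blk_apply d D j (\<lambda>t. 0) = (\<lambda>a. 0)"
  unfolding blk_apply_def by simp

lemma adj_zero: "(\<And>a. a < L \<Longrightarrow> r a = 0) \<Longrightarrow> blk_adj_apply L d D p r = (\<lambda>t. 0)"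
  unfolding blk_adj_apply_def by (rule ext, rule sum.neutral) auto

context
  fixes L d M :: nat and D :: "nat \<Rightarrow> nat \<Rightarrow> complex" and mu :: real
  assumes dpos: "0 < d"
    and orth: "\<forall>l<M. \<forall>s<d. \<forall>t<d. blk_gram L d D l l s t = (if s = t then 1 else 0)"
    and mu: "mu = block_coherence L d M D"
begin

lemma gapply_id: "p < M \<Longrightarrow> t < d \<Longrightarrow> gapply d (blk_gram L d D p p) v t = v t"
  unfolding gapply_def using orth
  by (simp add: if_distrib[where f="\<lambda>x. x * _"] cong: if_cong) 


definition offd :: "nat set \<Rightarrow> (nat \<Rightarrow> nat \<Rightarrow> complex) \<Rightarrow> nat \<Rightarrow> (nat \<Rightarrow> complex)" where
  "offd S c p = (\<lambda>t. \<Sum>j\<in>S-{p}. gapply d (blk_gram L d D p j) (c j) t)"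

lemma adj_comb:
  assumes "finite S" "S \<subseteq> {..<M}" "p < M" "t < d"
  shows "blk_adj_apply L d D p (comb d D S c) t = (if p \<in> S then c p t else 0) + offd S c p t"
proof -
  have "blk_adj_apply L d D p (comb d D S c) t = (\<Sum>j\<in>S. gapply d (blk_gram L d D p j) (c j) t)"
    unfolding comb_def adj_sum adj_blk_apply ..
  also have "\<dots> = (if p \<in> S then c p t else 0) + offd S c p t"
  proof (cases "p \<in> S")
    case True
    then show ?thesis unfolding offd_def
      using sum.remove[OF assms(1) True, of "\<lambda>j. gapply d (blk_gram L d D p j) (c j) t"]
        gapply_id[OF assms(3,4)] by simp
  next
    case False
    then have "S - {p} = S" by auto
    then show ?thesis using False unfolding offd_def by simp
  qed
  finally show ?thesis .
qed

lemma offd_bound: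
  assumes "finite S" "S \<subseteq> {..<M}" "p < M"
  shows "vnorm d (offd S c p) \<le> real d * mu * (\<Sum>j\<in>S-{p}. vnorm d (c j))"
proof -
  have "vnorm d (offd S c p) \<le> (\<Sum>j\<in>S-{p}. vnorm d (gapply d (blk_gram L d D p j) (c j)))"
    unfolding offd_def using assms(1) by (intro vnorm_sum) auto
  also have "\<dots> \<le> (\<Sum>j\<in>S-{p}. real d * mu * vnorm d (c j))"
    by (rule sum_mono) (use assms dpos in \<open>auto simp: mu intro!: gram_vec_bound\<close>)
  finally show ?thesis by (simp add: sum_distrib_left)
qed


lemma comb_zero:
  assumes "\<forall>j\<in>S. vnorm d (c j) = 0"
  shows "comb d D S c = (\<lambda>a. 0)"
proof -
  have "\<And>j. j \<in> S \<Longrightarrow> blk_apply d D j (c j) = (\<lambda>a. 0)"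
  proof -
    fix j assume "j \<in> S"
    then have "blk_apply d D j (c j) = blk_apply d D j (\<lambda>t. 0)"
      using assms vnorm_eq0 by (intro blk_apply_cong) blast
    then show "blk_apply d D j (c j) = (\<lambda>a. 0)" by (simp add: blk_apply_zero)
  qed
  then show ?thesis unfolding comb_def by (intro ext sum.neutral) auto
qed

lemma select:
  assumes fin: "finite S" and sub: "S \<subseteq> {..<M}" and card: "card S \<le> k"
    and cond: "(2 * real k - 1) * real d * mu < 1" and mu0: "0 \<le> mu"
    and nz: "\<exists>a<L. comb d D S c a \<noteq> 0" and q: "q < M" "q \<notin> S"
  shows "\<exists>p\<in>S. vnorm d (blk_adj_apply L d D q (comb d D S c))
               < vnorm d (blk_adj_apply L d D p (comb d D S c))"
proof -
  have Sne: "S \<noteq> {}" using nz unfolding comb_def by auto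
  define m where "m = Max ((\<lambda>j. vnorm d (c j)) ` S)"
  have mge: "\<forall>j\<in>S. vnorm d (c j) \<le> m" unfolding m_def using fin by auto
  obtain p where p: "p \<in> S" "vnorm d (c p) = m"
  proof -
    have "m \<in> (\<lambda>j. vnorm d (c j)) ` S" unfolding m_def using fin Sne by (intro Max_in) auto
    then show ?thesis using that by auto
  qed
  have pM: "p < M" using p sub by auto
  have mpos: "m > 0"
  proof (rule ccontr)
    assume "\<not> m > 0"
    then have "\<forall>j\<in>S. vnorm d (c j) = 0" using mge vnorm_nonneg
      by (meson antisym not_less order_trans)
    then show False using comb_zero nz by metis
  qed
  have k1: "card S \<ge> 1" using Sne fin by (simp add: Suc_le_eq card_gt_0_iff)
  have s1: "(\<Sum>j\<in>S-{p}. vnorm d (c j)) \<le> (real k - 1) * m"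
  proof -
    have "(\<Sum>j\<in>S-{p}. vnorm d (c j)) \<le> real (card (S-{p})) * m"
      using mge by (intro sum_bounded_above) auto
    also have "real (card (S-{p})) = real (card S) - 1" using p fin k1 by simp
    finally show ?thesis using card mpos
      by (smt (verit, best) mult_right_mono of_nat_le_iff)
  qed
  have s2: "(\<Sum>j\<in>S. vnorm d (c j)) \<le> real k * m"
  proof -
    have "(\<Sum>j\<in>S. vnorm d (c j)) \<le> real (card S) * m"
      using mge by (intro sum_bounded_above) auto
    then show ?thesis using card mpos
      by (smt (verit, best) mult_right_mono of_nat_le_iff)
  qed
  have dm0: "0 \<le> real d * mu" using mu0 by simp
  have "m = vnorm d (\<lambda>t. blk_adj_apply L d D p (comb d D S c) t - offd S c p t)"
    unfolding p(2)[symmetric] using p(1) adj_comb[OF fin sub pM] by (intro vnorm_cong) auto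
  also have "\<dots> \<le> vnorm d (blk_adj_apply L d D p (comb d D S c)) + vnorm d (offd S c p)"
    by (rule vnorm_diff)
  also have "vnorm d (offd S c p) \<le> real d * mu * ((real k - 1) * m)"
    using offd_bound[OF fin sub pM, of c] s1 dm0 by (meson mult_left_mono order_trans)
  finally have lp: "m - real d * mu * ((real k - 1) * m) \<le> vnorm d (blk_adj_apply L d D p (comb d D S c))"
    by linarith
  have "vnorm d (blk_adj_apply L d D q (comb d D S c)) = vnorm d (offd S c q)"
    using q adj_comb[OF fin sub q(1)] by (intro vnorm_cong) auto
  also have "\<dots> \<le> real d * mu * (\<Sum>j\<in>S-{q}. vnorm d (c j))" by (rule offd_bound[OF fin sub q(1)])
  also have "S - {q} = S" using q by auto
  also have "real d * mu * (\<Sum>j\<in>S. vnorm d (c j)) \<le> real d * mu * (real k * m)"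
    using s2 dm0 by (rule mult_left_mono)
  finally have lq: "vnorm d (blk_adj_apply L d D q (comb d D S c)) \<le> real d * mu * (real k * m)" .
  have "m * ((2 * real k - 1) * real d * mu) < m * 1" using cond mpos by simp
  then have "real d * mu * (real k * m) < m - real d * mu * ((real k - 1) * m)"
    by (simp add: algebra_simps)
  then show ?thesis using lp lq p(1) by force
qed


lemma energy:
  assumes fin: "finite S" and sub: "S \<subseteq> {..<M}" and card: "card S \<le> k"
    and gam: "0 < 1 - (real k - 1) * real d * mu" and mu0: "0 \<le> mu"
    and rep: "\<forall>a<L. r a = comb d D S c a"
    and Ab: "\<forall>j\<in>S. vnorm d (blk_adj_apply L d D j r) \<le> A"
  shows "(1 - (real k - 1) * real d * mu) / real k * (vnorm L r)\<^sup>2 \<le> A\<^sup>2"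
proof -
  define a where "a j = vnorm d (c j)" for j
  define P where "P = (\<Sum>j\<in>S. a j)"
  define Q where "Q = (\<Sum>j\<in>S. (a j)\<^sup>2)"
  define \<rho> where "\<rho> = (vnorm L r)\<^sup>2"
  define \<gamma> where "\<gamma> = 1 - (real k - 1) * real d * mu"
  have dm0: "0 \<le> real d * mu" using mu0 by simp
  have adjr: "blk_adj_apply L d D j r = blk_adj_apply L d D j (comb d D S c)" for j
    using rep by (intro adj_cong) auto
  have "complex_of_real \<rho> = ip L r r" unfolding \<rho>_def ip_self ..
  also have "\<dots> = ip L (comb d D S c) r" using rep by (intro ip_cong) auto
  also have "\<dots> = (\<Sum>j\<in>S. ip d (c j) (blk_adj_apply L d D j r))"
    unfolding comb_def ip_sum_left adjoint ..
  finally have "\<rho> = Re (\<Sum>j\<in>S. ip d (c j) (blk_adj_apply L d D j r))"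
    by (metis Re_complex_of_real)
  then have rho: "\<rho> = (\<Sum>j\<in>S. Re (ip d (c j) (blk_adj_apply L d D j r)))" by simp
  have A0: "\<forall>j\<in>S. 0 \<le> A" using Ab vnorm_nonneg order_trans by blast
  have up: "\<rho> \<le> P * A"
  proof -
    have "\<rho> \<le> (\<Sum>j\<in>S. a j * A)" unfolding rho
    proof (rule sum_mono)
      fix j assume j: "j \<in> S"
      have "Re (ip d (c j) (blk_adj_apply L d D j r)) \<le> cmod (ip d (c j) (blk_adj_apply L d D j r))"
        by (rule complex_Re_le_cmod)
      also have "\<dots> \<le> a j * vnorm d (blk_adj_apply L d D j r)" unfolding a_def by (rule ip_cs)
      also have "\<dots> \<le> a j * A" using Ab j a_def by (simp add: mult_left_mono)
      finally show "Re (ip d (c j) (blk_adj_apply L d D j r)) \<le> a j * A" .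
    qed
    then show ?thesis unfolding P_def by (simp add: sum_distrib_right)
  qed
  have low: "Q - real d * mu * (P * P - Q) \<le> \<rho>"
  proof -
    have "(\<Sum>j\<in>S. (a j)\<^sup>2 - real d * mu * (a j * (P - a j))) \<le> \<rho>" unfolding rho
    proof (rule sum_mono)
      fix j assume j: "j \<in> S"
      have jM: "j < M" using j sub by auto
      have "ip d (c j) (blk_adj_apply L d D j r) = ip d (c j) (\<lambda>t. c j t + offd S c j t)"
        unfolding adjr using adj_comb[OF fin sub jM] j by (intro ip_cong) auto
      also have "\<dots> = complex_of_real ((a j)\<^sup>2) + ip d (c j) (offd S c j)"
        unfolding ip_add_right ip_self a_def ..
      finally have eq: "Re (ip d (c j) (blk_adj_apply L d D j r)) = (a j)\<^sup>2 + Re (ip d (c j) (offd S c j))"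
        by simp
      have "- Re (ip d (c j) (offd S c j)) \<le> cmod (ip d (c j) (offd S c j))"
        by (metis abs_Re_le_cmod abs_le_iff)
      also have "\<dots> \<le> a j * vnorm d (offd S c j)" unfolding a_def by (rule ip_cs)
      also have "\<dots> \<le> a j * (real d * mu * (\<Sum>i\<in>S-{j}. a i))"
        unfolding a_def by (rule mult_left_mono[OF offd_bound[OF fin sub jM]]) simp
      also have "(\<Sum>i\<in>S-{j}. a i) = P - a j" unfolding P_def using sum_diff1[OF fin, of a j] j by simp
      finally show "(a j)\<^sup>2 - real d * mu * (a j * (P - a j)) \<le> Re (ip d (c j) (blk_adj_apply L d D j r))"
        unfolding eq by (simp add: algebra_simps)
    qed
    moreover have "(\<Sum>j\<in>S. (a j)\<^sup>2 - real d * mu * (a j * (P - a j))) = Q - real d * mu * (P * P - Q)"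
      unfolding Q_def P_def
      by (simp add: sum_subtractf sum_distrib_left sum_distrib_right right_diff_distrib power2_eq_square algebra_simps sum.distrib)
    ultimately show ?thesis by simp
  qed
  have PQ: "P\<^sup>2 \<le> real k * Q"
  proof -
    have "P\<^sup>2 \<le> Q * real (card S)" unfolding P_def Q_def by (rule sum_squared_le_sum_of_squares)
    also have "\<dots> \<le> Q * real k" using card by (intro mult_left_mono) (auto simp: Q_def sum_nonneg)
    finally show ?thesis by (simp add: mult.commute)
  qed
  have Q0: "0 \<le> Q" unfolding Q_def by (simp add: sum_nonneg)
  have P0: "0 \<le> P" unfolding P_def a_def by (simp add: sum_nonneg)
  have rho0: "0 \<le> \<rho>" unfolding \<rho>_def by simp
  have gQ: "\<gamma> * Q \<le> \<rho>"
  proof -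
    have "real d * mu * (P * P - Q) \<le> real d * mu * ((real k - 1) * Q)"
      using PQ dm0 by (intro mult_left_mono) (auto simp: power2_eq_square algebra_simps)
    then show ?thesis using low unfolding \<gamma>_def by (simp add: algebra_simps)
  qed
  show ?thesis
  proof (cases "\<rho> = 0 \<or> k = 0")
    case True
    then show ?thesis unfolding \<rho>_def[symmetric] by auto
  next
    case False
    then have rpos: "\<rho> > 0" and kpos: "real k > 0" using rho0 by auto
    have "\<rho> * \<rho> \<le> (P * A) * (P * A)" using up rho0 by (simp add: mult_mono)
    also have "\<dots> = P\<^sup>2 * A\<^sup>2" by (simp add: power2_eq_square)
    also have "\<dots> \<le> (real k * Q) * A\<^sup>2" using PQ by (simp add: mult_right_mono)
    finally have "\<gamma> * (\<rho> * \<rho>) \<le> \<gamma> * ((real k * Q) * A\<^sup>2)"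
      using gam \<gamma>_def by (simp add: mult_left_mono)
    also have "\<dots> = (\<gamma> * Q) * (real k * A\<^sup>2)" by simp
    also have "\<dots> \<le> \<rho> * (real k * A\<^sup>2)" using gQ by (simp add: mult_right_mono)
    finally have "\<gamma> * \<rho> \<le> real k * A\<^sup>2" using rpos by (simp add: mult_ac)
    then show ?thesis unfolding \<rho>_def[symmetric] \<gamma>_def[symmetric] using kpos
      by (simp add: divide_le_eq mult.commute)
  qed
qed


lemma step_energy:
  assumes iM: "i < M"
  shows "(vnorm L (\<lambda>a. r a - blk_apply d D i (blk_adj_apply L d D i r) a))\<^sup>2
         = (vnorm L r)\<^sup>2 - (vnorm d (blk_adj_apply L d D i r))\<^sup>2"
proof -
  define z where "z = blk_adj_apply L d D i r"
  define w where "w = blk_apply d D i z"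
  have wr: "ip L w r = ip d z z" unfolding w_def z_def adjoint ..
  have rw: "ip L r w = ip d z z" using arg_cong[OF wr, of cnj] by (simp add: ip_cnj ip_self)
  have ww: "ip L w w = ip d z z"
    unfolding w_def adjoint adj_blk_apply using gapply_id[OF iM] by (intro ip_cong) auto
  have "complex_of_real ((vnorm L (\<lambda>a. r a - w a))\<^sup>2) = ip L (\<lambda>a. r a - w a) (\<lambda>a. r a - w a)"
    by (simp add: ip_self)
  also have "\<dots> = ip L r r - ip L r w - (ip L w r - ip L w w)"
    unfolding ip_diff_left ip_diff_right ..
  also have "\<dots> = complex_of_real ((vnorm L r)\<^sup>2 - (vnorm d z)\<^sup>2)"
    unfolding wr rw ww by (simp add: ip_self)
  finally show ?thesis unfolding w_def z_def of_real_eq_iff .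
qed

end


lemma sum_block: "sum (g::nat\<Rightarrow>complex) {m..<m+n} = (\<Sum>t<n. g (m+t))"
  by (induct n) (auto simp: add.commute)

lemma matvec_blocks: "matvec (M * d) D x a = (\<Sum>l<M. blk_apply d D l (blk d x l) a)"
  unfolding matvec_def blk_apply_def blk_def
  using sum.nat_group[of "\<lambda>j. D a j * x j" d M, symmetric] by (simp add: sum_block)


theorem theorem4:
  fixes R M d k :: nat and D :: "nat \<Rightarrow> nat \<Rightarrow> complex"
    and x0 :: "nat \<Rightarrow> complex" and i :: "nat \<Rightarrow> nat"
  assumes "L = R * d" and "N = M * d"
    and orth: "\<forall>l<M. \<forall>s<d. \<forall>t<d.
                 blk_gram L d D l l s t = (if s = t then 1 else 0)"
    and spark: "\<forall>g. block_sparse d M (2 * k) g \<and> (\<exists>j<N. g j \<noteq> 0)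
                   \<longrightarrow> (\<exists>a<L. matvec N D g a \<noteq> 0)"
    and x0: "block_sparse d M k x0"
    and y: "y = matvec N D x0"
    and mu: "mu = block_coherence L d M D" and mupos: "mu > 0"
    and cond: "real (k * d) < (1 / 2) * (1 / mu + real d)"
    and beta: "beta = 1 - (1 - (real k - 1) * real d * mu) / real k"
    and run: "bmp_choice L d M D y i"
  shows "(\<forall>l\<ge>1. (\<exists>a<L. bmp_res L d D y i (l - 1) a \<noteq> 0)
                 \<longrightarrow> vnorm d (blk d x0 (i l)) > 0)
       \<and> (\<forall>l. (vnorm L (bmp_res L d D y i l))\<^sup>2 \<le> beta ^ l * (vnorm L (bmp_res L d D y i 0))\<^sup>2)"
proof (cases "d = 0")
  case True
  then have L0: "L = 0" using assms(1) by simp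
  have "vnorm L v = 0" for v unfolding L0 vnorm_def by simp
  then show ?thesis using L0 by simp
next
  case False
  then have dpos: "0 < d" by simp
  let ?r = "bmp_res L d D y i"
  define S where "S = {l. l < M \<and> vnorm d (blk d x0 l) \<noteq> 0}"
  have fin: "finite S" and sub: "S \<subseteq> {..<M}" unfolding S_def by auto
  have card: "card S \<le> k" using x0 unfolding block_sparse_def S_def .
  have mu0: "0 \<le> mu" using mupos by simp
  have cond2: "(2 * real k - 1) * real d * mu < 1"
  proof -
    have "2 * mu * real (k * d) < 2 * mu * ((1 / 2) * (1 / mu + real d))"
      using cond mupos by (intro mult_strict_left_mono) auto
    then show ?thesis using mupos by (simp add: algebra_simps)
  qed
  have gam: "0 < 1 - (real k - 1) * real d * mu"
  proof -
    have "(real k - 1) * (real d * mu) \<le> (2 * real k - 1) * (real d * mu)"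
      using mu0 by (intro mult_right_mono) auto
    then show ?thesis using cond2 by (simp add: mult.assoc)
  qed
  have beta0: "0 \<le> beta"
  proof (cases "k = 0")
    case True then show ?thesis using beta by simp
  next
    case False
    have "0 \<le> (real k - 1) * real d * mu" using False mu0 by simp
    then have "(1 - (real k - 1) * real d * mu) / real k \<le> 1" using False by (simp add: divide_le_eq)
    then show ?thesis using beta by simp
  qed
  have yrep: "\<forall>a<L. ?r 0 a = comb d D S (\<lambda>j. blk d x0 j) a"
  proof (intro allI impI)
    fix a assume "a < L"
    have "?r 0 a = (\<Sum>l<M. blk_apply d D l (blk d x0 l) a)"
      using y assms(2) matvec_blocks by simp
    also have "\<dots> = (\<Sum>l\<in>S. blk_apply d D l (blk d x0 l) a)"
    proof -
      have z: "\<forall>l\<in>{..<M} - S. blk_apply d D l (blk d x0 l) a = 0"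
      proof
        fix l assume "l \<in> {..<M} - S"
        then have "vnorm d (blk d x0 l) = 0" unfolding S_def by auto
        then have "blk_apply d D l (blk d x0 l) = blk_apply d D l (\<lambda>t. 0)"
          using vnorm_eq0 by (intro blk_apply_cong) blast
        then show "blk_apply d D l (blk d x0 l) a = 0" by (simp add: blk_apply_zero)
      qed
      show ?thesis using sum.mono_neutral_right[OF _ sub z] by simp
    qed
    finally show "?r 0 a = comb d D S (\<lambda>j. blk d x0 j) a" unfolding comb_def .
  qed
  have choice: "i (Suc n) < M \<and> (\<forall>j<M. vnorm d (blk_adj_apply L d D j (?r n))
           \<le> vnorm d (blk_adj_apply L d D (i (Suc n)) (?r n)))" for n
    using run unfolding bmp_choice_def by (metis diff_Suc_1 le_add1 plus_1_eq_Suc)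
  have sel: "i (Suc n) \<in> S" if rep: "\<forall>a<L. ?r n a = comb d D S c a" and nz: "\<exists>a<L. ?r n a \<noteq> 0" for n c
  proof (rule ccontr)
    assume ni: "i (Suc n) \<notin> S"
    have nz': "\<exists>a<L. comb d D S c a \<noteq> 0" using rep nz by auto
    have adjr: "blk_adj_apply L d D j (?r n) = blk_adj_apply L d D j (comb d D S c)" for j
      using rep by (intro adj_cong) auto
    obtain p where p: "p \<in> S" "vnorm d (blk_adj_apply L d D (i (Suc n)) (comb d D S c))
               < vnorm d (blk_adj_apply L d D p (comb d D S c))"
      using select[OF dpos orth mu fin sub card cond2 mu0 nz' conjunct1[OF choice[of n]] ni] by blast
    then show False using choice[of n] sub adjr by (metis lessThan_iff not_le subsetD)
  qed
  have inv: "\<exists>c. \<forall>a<L. ?r n a = comb d D S c a" for n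
  proof (induction n)
    case 0 then show ?case using yrep by blast
  next
    case (Suc n)
    then obtain c where c: "\<forall>a<L. ?r n a = comb d D S c a" by blast
    show ?case
    proof (cases "\<exists>a<L. ?r n a \<noteq> 0")
      case False
      then have "blk_adj_apply L d D (i (Suc n)) (?r n) = (\<lambda>t. 0)" by (intro adj_zero) auto
      then have "\<forall>a<L. ?r (Suc n) a = ?r n a" by (simp add: blk_apply_zero)
      then show ?thesis using c by auto
    next
      case True
      define q where "q = i (Suc n)"
      have qS: "q \<in> S" using sel[OF c True] q_def by simp
      define z where "z = blk_adj_apply L d D q (?r n)"
      define c' where "c' = c(q := (\<lambda>t. c q t - z t))"
      have "\<forall>a<L. ?r (Suc n) a = comb d D S c' a"
      proof (intro allI impI)
        fix a assume a: "a < L"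
        have "?r (Suc n) a = comb d D S c a - blk_apply d D q z a"
          using c a by (simp add: q_def z_def)
        also have "\<dots> = comb d D S c' a"
          unfolding comb_def c'_def
          using sum.remove[OF fin qS, of "\<lambda>j. blk_apply d D j (c j) a"]
            sum.remove[OF fin qS, of "\<lambda>j. blk_apply d D j ((c(q := (\<lambda>t. c q t - z t))) j) a"]
          by (simp add: blk_apply_diff)
        finally show "?r (Suc n) a = comb d D S c' a" .
      qed
      then show ?thesis by blast
    qed
  qed
  have part1: "\<forall>l\<ge>1. (\<exists>a<L. ?r (l - 1) a \<noteq> 0) \<longrightarrow> vnorm d (blk d x0 (i l)) > 0"
  proof (intro allI impI)
    fix l :: nat assume l1: "l \<ge> 1" and nz: "\<exists>a<L. ?r (l - 1) a \<noteq> 0"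
    obtain n where n: "l = Suc n" using l1 by (cases l) auto
    obtain c where c: "\<forall>a<L. ?r n a = comb d D S c a" using inv by blast
    have "i (Suc n) \<in> S" using sel[OF c] nz n by simp
    then show "vnorm d (blk d x0 (i l)) > 0" using n S_def vnorm_nonneg
      by (metis (mono_tags, lifting) less_eq_real_def mem_Collect_eq)
  qed
  have stepb: "(vnorm L (?r (Suc n)))\<^sup>2 \<le> beta * (vnorm L (?r n))\<^sup>2" for n
  proof -
    obtain c where c: "\<forall>a<L. ?r n a = comb d D S c a" using inv by blast
    define A where "A = vnorm d (blk_adj_apply L d D (i (Suc n)) (?r n))"
    have eq: "(vnorm L (?r (Suc n)))\<^sup>2 = (vnorm L (?r n))\<^sup>2 - A\<^sup>2"
      using step_energy[OF dpos orth mu conjunct1[OF choice[of n]], of "?r n"] A_def by simp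
    have Ab: "\<forall>j\<in>S. vnorm d (blk_adj_apply L d D j (?r n)) \<le> A"
      using choice[of n] sub A_def by auto
    have "(1 - (real k - 1) * real d * mu) / real k * (vnorm L (?r n))\<^sup>2 \<le> A\<^sup>2"
      by (rule energy[OF dpos orth mu fin sub card gam mu0 c Ab])
    then show ?thesis unfolding eq beta by (simp add: algebra_simps)
  qed
  have part2: "(vnorm L (?r l))\<^sup>2 \<le> beta ^ l * (vnorm L (?r 0))\<^sup>2" for l
  proof (induction l)
    case 0 then show ?case by simp
  next
    case (Suc l)
    have "(vnorm L (?r (Suc l)))\<^sup>2 \<le> beta * (vnorm L (?r l))\<^sup>2" by (rule stepb)
    also have "\<dots> \<le> beta * (beta ^ l * (vnorm L (?r 0))\<^sup>2)"
      using Suc beta0 by (rule mult_left_mono)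
    finally show ?case by (simp add: mult.assoc)
  qed
  show ?thesis using part1 part2 by blast
qed


end
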